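(* Let $H$ be an $r$-graph. If $H$ contains a $2$-locally large subgraph, then $H$ is $2$-locally large.
   Context: An $r$-graph is an $r$-uniform hypergraph. Let $H$ be an $r$-graph on $m$ vertices and $\sigma:V(H)\to[m]$ a bijection. For $x\in V(H)$ and $1\le i\le r$, $T_x^i$ is the set of edges $e\ni x$ such that $\sigma(x)$ is the $i$-th smallest of the values $\sigma(v)$, $v\in e$. For $r+1\le i\le 2r+1$, $T_x^i$ is the set of edges $e\not\ni x$ such that $\sigma(x)$ is the $(i-r)$-th smallest among the values $\sigma(v)$, $v\in e\cup\{x\}$. $H$ is $2$-locally large if there exists a bijection $\sigma:V(H)\to[m]$ such that for every vertex $x\in V(H)$ some $T_x^i$, $i\in[2r+1]$, contains at least two edges. *)

theory Defs
  imports Main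
begin

definition r_graph :: "nat \<Rightarrow> 'a set \<Rightarrow> 'a set set \<Rightarrow> bool" where
  "r_graph r V E \<longleftrightarrow> finite V \<and> (\<forall>e\<in>E. e \<subseteq> V \<and> card e = r)"

definition subgraph :: "'a set \<Rightarrow> 'a set set \<Rightarrow> 'a set \<Rightarrow> 'a set set \<Rightarrow> bool" where
  "subgraph V' E' V E \<longleftrightarrow> V' \<subseteq> V \<and> E' \<subseteq> E \<and> (\<forall>e\<in>E'. e \<subseteq> V')"

text \<open>The sets T_x^i with respect to the ordering sigma (sigma injective on the vertices,
  so the i-th smallest value among a set is the one with exactly i values \<le> it).\<close>
definition T_set :: "nat \<Rightarrow> ('a \<Rightarrow> nat) \<Rightarrow> 'a set set \<Rightarrow> 'a \<Rightarrow> nat \<Rightarrow> 'a set set" where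
  "T_set r \<sigma> E x i =
     (if i \<le> r then {e\<in>E. x \<in> e \<and> card {v\<in>e. \<sigma> v \<le> \<sigma> x} = i}
      else {e\<in>E. x \<notin> e \<and> card {v\<in>insert x e. \<sigma> v \<le> \<sigma> x} = i - r})"

definition locally_large2 :: "nat \<Rightarrow> 'a set \<Rightarrow> 'a set set \<Rightarrow> bool" where
  "locally_large2 r V E \<longleftrightarrow>
     (\<exists>\<sigma>. bij_betw \<sigma> V {1..card V} \<and>
          (\<forall>x\<in>V. \<exists>i\<in>{1..2*r+1}. 2 \<le> card (T_set r \<sigma> E x i)))"

end

theory Submission
  imports Defs
begin

theorem proposition2:
  fixes r :: nat and V V' :: "'a set" and E E' :: "'a set set"
  assumes "r_graph r V E"
    and "subgraph V' E' V E"
    and "V' \<noteq> {}"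
    and "locally_large2 r V' E'"
  shows "locally_large2 r V E"
proof -
  have finV: "finite V" and Ecard: "\<And>e. e \<in> E \<Longrightarrow> e \<subseteq> V \<and> card e = r"
    using assms(1) unfolding r_graph_def by auto
  have VV: "V' \<subseteq> V" and EE: "E' \<subseteq> E" and E'V: "\<And>e. e \<in> E' \<Longrightarrow> e \<subseteq> V'"
    using assms(2) unfolding subgraph_def by auto
  have finE: "finite E"
    by (rule finite_subset[of E "Pow V"]) (use Ecard finV in auto)
  have finE': "finite E'" using finE EE finite_subset by blast
  have finV': "finite V'" using finV VV finite_subset by blast
  obtain s where sb: "bij_betw s V' {1..card V'}"
    and sl: "\<forall>x\<in>V'. \<exists>i\<in>{1..2*r+1}. 2 \<le> card (T_set r s E' x i)"
    using assms(4) unfolding locally_large2_def by blast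
  obtain x0 where x0: "x0 \<in> V'" using assms(3) by blast
  then obtain i0 where "2 \<le> card (T_set r s E' x0 i0)" using sl by blast
  moreover have "T_set r s E' x0 i0 \<subseteq> E'" unfolding T_set_def by auto
  ultimately have cE': "2 \<le> card E'" using finE' card_mono by (meson order_trans)
  obtain f where fb: "bij_betw f (V - V') {0..<card (V - V')}"
    using ex_bij_betw_finite_nat finV by blast
  define \<sigma> where "\<sigma> x = (if x \<in> V' then s x else card V' + 1 + f x)" for x
  have cVV: "card (V - V') = card V - card V'" using finV' VV card_Diff_subset by blast
  have cle: "card V' \<le> card V" using finV VV card_mono by blast
  have b1: "bij_betw \<sigma> V' {1..card V'}"
    using sb by (rule bij_betw_cong[THEN iffD1, rotated]) (simp add: \<sigma>_def)
  have b2': "bij_betw (\<lambda>x. card V' + 1 + f x) (V - V') ((\<lambda>n. card V' + 1 + n) ` {0..<card (V - V')})"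
    using fb by (rule bij_betw_trans[of f _ _ "\<lambda>n. card V' + 1 + n", unfolded comp_def])
      (simp add: bij_betw_def inj_on_def)
  have img: "(\<lambda>n. card V' + 1 + n) ` {0..<card (V - V')} = {card V' + 1..card V}"
  proof -
    have "(\<lambda>n. card V' + 1 + n) ` {0..<card (V - V')} = {card V' + 1..<card V' + 1 + card (V - V')}"
      using image_add_atLeastLessThan[of "card V' + 1" 0 "card (V - V')"] by (simp add: add.commute)
    also have "\<dots> = {card V' + 1..card V}" using cVV cle by auto
    finally show ?thesis .
  qed
  have b2: "bij_betw \<sigma> (V - V') {card V' + 1..card V}"
    using b2' unfolding img by (rule bij_betw_cong[THEN iffD1, rotated]) (simp add: \<sigma>_def)
  have "bij_betw \<sigma> (V' \<union> (V - V')) ({1..card V'} \<union> {card V' + 1..card V})"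
    by (rule bij_betw_combine[OF b1 b2]) auto
  moreover have "V' \<union> (V - V') = V" using VV by auto
  moreover have "{1..card V'} \<union> {card V' + 1..card V} = {1..card V}" using cle by auto
  ultimately have bs: "bij_betw \<sigma> V {1..card V}" by simp
  have "\<forall>x\<in>V. \<exists>i\<in>{1..2*r+1}. 2 \<le> card (T_set r \<sigma> E x i)"
  proof
    fix x assume xV: "x \<in> V"
    have finT: "finite (T_set r \<sigma> E x i)" for i
      by (rule finite_subset[OF _ finE]) (auto simp: T_set_def)
    show "\<exists>i\<in>{1..2*r+1}. 2 \<le> card (T_set r \<sigma> E x i)"
    proof (cases "x \<in> V'")
      case True
      then obtain i where i: "i \<in> {1..2*r+1}" and c: "2 \<le> card (T_set r s E' x i)" using sl by blast
      have "T_set r s E' x i \<subseteq> T_set r \<sigma> E x i"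
      proof
        fix e assume e: "e \<in> T_set r s E' x i"
        then have eE': "e \<in> E'" unfolding T_set_def by (auto split: if_splits)
        then have sub: "insert x e \<subseteq> V'" using E'V True by auto
        have eq1: "{v\<in>e. \<sigma> v \<le> \<sigma> x} = {v\<in>e. s v \<le> s x}" using sub True by (auto simp: \<sigma>_def)
        have eq2: "{v\<in>insert x e. \<sigma> v \<le> \<sigma> x} = {v\<in>insert x e. s v \<le> s x}" using sub True by (auto simp: \<sigma>_def)
        show "e \<in> T_set r \<sigma> E x i" using e eE' EE eq1 eq2 unfolding T_set_def by (auto split: if_splits)
      qed
      then have "card (T_set r s E' x i) \<le> card (T_set r \<sigma> E x i)" using finT card_mono by blast
      then show ?thesis using i c by force
    next
      case False
      have "E' \<subseteq> T_set r \<sigma> E x (2*r+1)"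
      proof
        fix e assume eE': "e \<in> E'"
        have eV': "e \<subseteq> V'" using E'V eE' by auto
        have ce: "card e = r" using Ecard eE' EE by auto
        have xe: "x \<notin> e" using eV' False by auto
        have "\<forall>v\<in>V'. \<sigma> v \<le> \<sigma> x"
        proof
          fix v assume "v \<in> V'"
          then have "s v \<in> {1..card V'}" using sb bij_betwE by blast
          then show "\<sigma> v \<le> \<sigma> x" using \<open>v \<in> V'\<close> False by (simp add: \<sigma>_def)
        qed
        then have "{v\<in>insert x e. \<sigma> v \<le> \<sigma> x} = insert x e" using eV' by auto
        moreover have "card (insert x e) = r + 1"
          using xe ce finV' eV' finite_subset by (metis Suc_eq_plus1 card_insert_disjoint)
        ultimately show "e \<in> T_set r \<sigma> E x (2*r+1)"
          using eE' EE xe unfolding T_set_def by auto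
      qed
      then have "card E' \<le> card (T_set r \<sigma> E x (2*r+1))" using finT card_mono by blast
      then show ?thesis using cE' by force
    qed
  qed
  then show ?thesis unfolding locally_large2_def using bs by blast
qed

end
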